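(* Let $A,W\in \mathbb{C}^{n\times n}$. Then $A^{\mathrm{cEP},W}=(A^{D,W})^2(A^{D,W})^{(1,3)_W}$.
   Context: $\mathbb{C}^{n\times n}$ carries the conjugate transpose involution. With $k=\max\{\mathrm{ind}(AW),\mathrm{ind}(WA)\}$, the weighted core-EP inverse $A^{\mathrm{cEP},W}$ is the unique $X$ with $WAWX=(WA)^k[(WA)^k]^{\dagger}$ and $\mathcal{R}(X)\subseteq\mathcal{R}((AW)^k)$. $A^{D,W}$ is the $W$-weighted Drazin inverse of $A$. A weighted $(1,3,W)$-inverse of $B$ is any $X$ with $B=BWXWB$ and $(WBWX)^*=WBWX$, denoted $B^{(1,3)_W}$. *)

theory Defs
  imports "HOL-Analysis.Analysis"
begin

definition cadj :: "complex^'n^'m \<Rightarrow> complex^'m^'n" where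
  "cadj A = (\<chi> i j. cnj (A $ j $ i))"

definition mpow :: "complex^'n^'n \<Rightarrow> nat \<Rightarrow> complex^'n^'n" where
  "mpow A k = (((\<lambda>M. A ** M) ^^ k) (mat 1))"

definition mrange :: "complex^'n^'m \<Rightarrow> (complex^'m) set" where
  "mrange A = range (\<lambda>v. A *v v)"

definition ind :: "complex^'n^'n \<Rightarrow> nat" where
  "ind A = (LEAST k. mrange (mpow A k) = mrange (mpow A (Suc k)))"

definition is_MP :: "complex^'n^'n \<Rightarrow> complex^'n^'n \<Rightarrow> bool" where
  "is_MP A X \<longleftrightarrow> A ** X ** A = A \<and> X ** A ** X = X \<and>
     cadj (A ** X) = A ** X \<and> cadj (X ** A) = X ** A"

definition mp_inv :: "complex^'n^'n \<Rightarrow> complex^'n^'n" where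
  "mp_inv A = (THE X. is_MP A X)"

definition is_wdrazin :: "complex^'n^'n \<Rightarrow> complex^'n^'n \<Rightarrow> complex^'n^'n \<Rightarrow> bool" where
  "is_wdrazin A W X \<longleftrightarrow>
     mpow (A ** W) (Suc (ind (A ** W))) ** X ** W = mpow (A ** W) (ind (A ** W)) \<and>
     X ** W ** A ** W ** X = X \<and> A ** W ** X = X ** W ** A"

definition wdrazin :: "complex^'n^'n \<Rightarrow> complex^'n^'n \<Rightarrow> complex^'n^'n" where
  "wdrazin A W = (THE X. is_wdrazin A W X)"

definition is_wcoreEP :: "complex^'n^'n \<Rightarrow> complex^'n^'n \<Rightarrow> complex^'n^'n \<Rightarrow> bool" where
  "is_wcoreEP A W X \<longleftrightarrow>
     (let k = max (ind (A ** W)) (ind (W ** A)) in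
       W ** A ** W ** X = mpow (W ** A) k ** mp_inv (mpow (W ** A) k) \<and>
       mrange X \<subseteq> mrange (mpow (A ** W) k))"

definition wcoreEP :: "complex^'n^'n \<Rightarrow> complex^'n^'n \<Rightarrow> complex^'n^'n" where
  "wcoreEP A W = (THE X. is_wcoreEP A W X)"

definition is_w13 :: "complex^'n^'n \<Rightarrow> complex^'n^'n \<Rightarrow> complex^'n^'n \<Rightarrow> bool" where
  "is_w13 B W X \<longleftrightarrow> B = B ** W ** X ** W ** B \<and>
     cadj (W ** B ** W ** X) = W ** B ** W ** X"

end

theory Submission imports Defs begin

lemmas mma = matrix_mul_assoc

lemma mpow_0[simp]: "mpow A 0 = mat 1" by (simp add: mpow_def)
lemma mpow_Suc: "mpow A (Suc k) = A ** mpow A k" by (simp add: mpow_def)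
lemma mpow_add: "mpow A (m + n) = mpow A m ** mpow A n"
  by (induction m) (simp_all add: mpow_Suc mma)
lemma mpow_Suc': "mpow A (Suc k) = mpow A k ** A"
  using mpow_add[of A k 1] by (simp add: mpow_Suc)
lemma mpow_1[simp]: "mpow A 1 = A" by (simp add: mpow_Suc)
lemma mpow_comm: "A ** B = B ** A \<Longrightarrow> mpow A k ** B = B ** mpow A k"
  by (induction k) (simp_all add: mpow_Suc, metis mma)
lemma mpow_comm_self: "A ** mpow A k = mpow A k ** A"
  by (metis mpow_Suc mpow_Suc')
lemma mpow_transpose: "transpose (mpow A k) = mpow (transpose A) k"
  by (induction k) (simp_all add: mpow_Suc mpow_Suc' matrix_transpose_mul transpose_mat mpow_comm_self)

lemma mrange_mult: "mrange (M ** N) \<subseteq> mrange M"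
  unfolding mrange_def by (auto simp flip: matrix_vector_mul_assoc)

lemma mrange_factor:
  fixes M :: "complex^'n^'m" and N :: "complex^'p^'m"
  assumes "mrange N \<subseteq> mrange M"
  shows "\<exists>U. N = M ** U"
proof -
  have "\<forall>j. \<exists>u. N *v axis j 1 = M *v u" using assms unfolding mrange_def by blast
  then obtain u where u: "\<And>j. N *v axis j 1 = M *v u j" by metis
  define U where "U = (\<chi> l j. u j $ l)"
  have "N = M ** U"
  proof (rule vec_eq_iff[THEN iffD2], intro allI, rule vec_eq_iff[THEN iffD2], intro allI)
    fix i j
    have "N $ i $ j = (N *v axis j 1) $ i"
      by (simp add: matrix_vector_mult_def axis_def if_distrib cong: if_cong)
    also have "\<dots> = (M *v u j) $ i" by (simp only: u)
    also have "\<dots> = (M ** U) $ i $ j"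
      by (simp add: matrix_vector_mult_def matrix_matrix_mult_def U_def)
    finally show "N $ i $ j = (M ** U) $ i $ j" .
  qed
  then show ?thesis by blast
qed

lemma subspace_mrange: "subspace (mrange (M::complex^'n^'m))"
  unfolding subspace_def mrange_def
proof (intro conjI ballI allI)
  show "0 \<in> range ((*v) M)" by (metis matrix_vector_mult_0_right rangeI)
  fix x y assume "x \<in> range ((*v) M)" "y \<in> range ((*v) M)"
  then show "x + y \<in> range ((*v) M)" by (auto simp flip: matrix_vector_right_distrib)
next
  fix c :: real and x assume "x \<in> range ((*v) M)"
  then obtain v where v: "x = M *v v" by auto
  have "scaleR c x = M *v (scaleR c v)"
    by (simp add: v vec_eq_iff matrix_vector_mult_def scaleR_sum_right)
  then show "scaleR c x \<in> range ((*v) M)" by auto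
qed

lemma mrange_mult_img: "mrange (M ** N) = (\<lambda>v. M *v v) ` mrange N"
  unfolding mrange_def by (auto simp flip: matrix_vector_mul_assoc)

lemma mpow_mrange_Suc: "mrange (mpow M (Suc k)) \<subseteq> mrange (mpow M k)"
  by (simp add: mpow_Suc' mrange_mult)

lemma stab_exists: "\<exists>k. mrange (mpow (M::complex^'n^'n) k) = mrange (mpow M (Suc k))"
proof (rule ccontr)
  assume "\<not> ?thesis"
  then have ne: "\<And>k. mrange (mpow M (Suc k)) \<noteq> mrange (mpow M k)" by metis
  have lt: "dim (mrange (mpow M (Suc k))) < dim (mrange (mpow M k))" for k
  proof (rule dim_psubset)
    show "span (mrange (mpow M (Suc k))) \<subset> span (mrange (mpow M k))"
      using ne[of k] mpow_mrange_Suc[of M k] by (simp add: span_eq_iff[THEN iffD2, OF subspace_mrange])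
  qed
  have "dim (mrange (mpow M k)) + k \<le> dim (mrange (mpow M 0))" for k
  proof (induction k)
    case (Suc k) then show ?case using lt[of k] by simp
  qed simp
  from this[of "Suc (dim (mrange (mpow M 0)))"] show False by simp
qed

lemma ind_stab: "mrange (mpow (M::complex^'n^'n) (ind M)) = mrange (mpow M (Suc (ind M)))"
  unfolding ind_def by (rule LeastI_ex[OF stab_exists])

lemma stab_mono:
  assumes "mrange (mpow M j) = mrange (mpow M (Suc j))" "j \<le> i"
  shows "mrange (mpow M i) = mrange (mpow M (Suc i))"
  using assms(2)
proof (induction i rule: dec_induct)
  case base then show ?case using assms(1) .
next
  case (step i)
  then show ?case by (metis mpow_Suc mrange_mult_img)
qed

lemma right_chain:
  assumes "mpow a k = mpow a (Suc k) ** z"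
  shows "mpow a k = mpow a (k + j) ** mpow z j"
proof (induction j)
  case (Suc j)
  have e1: "mpow a (k + Suc j) = mpow a j ** mpow a (Suc k)"
    using mpow_add[of a j "Suc k"] by (simp add: add.commute)
  have "mpow a (k + Suc j) ** mpow z (Suc j) = mpow a j ** (mpow a (Suc k) ** z) ** mpow z j"
    by (simp only: e1 mpow_Suc[of z] mma)
  also have "\<dots> = mpow a (k + j) ** mpow z j"
    using mpow_add[of a j k] by (simp add: assms[symmetric] add.commute)
  finally show ?case using Suc by simp
qed simp

lemma left_chain:
  assumes "mpow a k = y ** mpow a (Suc k)"
  shows "mpow a k = mpow y j ** mpow a (k + j)"
proof (induction j)
  case (Suc j)
  have e1: "mpow a (k + Suc j) = mpow a (Suc k) ** mpow a j"
    using mpow_add[of a "Suc k" j] by simp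
  have "mpow y (Suc j) ** mpow a (k + Suc j) = mpow y j ** (y ** mpow a (Suc k)) ** mpow a j"
    by (simp only: e1 mpow_Suc'[of y] mma)
  also have "\<dots> = mpow y j ** mpow a (k + j)"
    using mpow_add[of a k j] by (simp add: assms[symmetric] mma)
  finally show ?case using Suc by simp
qed simp

definition drz :: "complex^'n^'n \<Rightarrow> nat \<Rightarrow> complex^'n^'n \<Rightarrow> bool" where
  "drz a k d \<longleftrightarrow> mpow a (Suc k) ** d = mpow a k \<and> d ** a ** d = d \<and> a ** d = d ** a"

lemma drazin_construct:
  assumes r: "mpow a p = mpow a (Suc p) ** x" and l: "mpow a p = y ** mpow a (Suc p)"
  shows "drz a p (mpow a p ** mpow x (Suc p))"
proof -
  define d where "d = mpow a p ** mpow x (Suc p)"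
  define e where "e = mpow y (Suc p) ** mpow a p"
  have F1: "mpow a p = mpow a (p + Suc p) ** mpow x (Suc p)" by (rule right_chain[OF r])
  have F2: "mpow a p = mpow y (Suc p) ** mpow a (p + Suc p)" by (rule left_chain[OF l])
  have de: "d = e"
  proof -
    have "e = mpow y (Suc p) ** (mpow a (p + Suc p) ** mpow x (Suc p))"
      unfolding e_def using F1 by simp
    also have "\<dots> = d" unfolding d_def by (simp only: mma F2[symmetric])
    finally show ?thesis by simp
  qed
  have pp: "mpow a (Suc p) ** mpow a p = mpow a (p + Suc p)"
    by (metis mpow_add add.commute)
  have pp2: "mpow a p ** a ** mpow a p = mpow a (p + Suc p)"
    by (metis mpow_Suc' pp)
  have c1: "mpow a (Suc p) ** d = mpow a p"
    unfolding d_def by (simp only: mma pp F1[symmetric])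
  have a1: "a ** mpow a p = mpow a (p + Suc p) ** a ** mpow x (Suc p)"
  proof -
    have "a ** mpow a p = a ** mpow a (p + Suc p) ** mpow x (Suc p)"
      using F1 by (metis mma)
    then show ?thesis by (simp add: mpow_comm_self)
  qed
  have c3: "a ** d = d ** a"
  proof -
    have "d ** a = mpow y (Suc p) ** (mpow a p ** a)" using de e_def by (simp add: mma)
    also have "\<dots> = mpow y (Suc p) ** (mpow a (p + Suc p) ** a ** mpow x (Suc p))"
      by (simp add: a1 mpow_comm_self[symmetric])
    also have "\<dots> = mpow a p ** a ** mpow x (Suc p)"
      by (simp only: mma F2[symmetric])
    also have "\<dots> = a ** d" by (simp add: d_def mma mpow_comm_self)
    finally show ?thesis by simp
  qed
  have c2: "d ** a ** d = d"
  proof -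
    have "d ** a ** d = mpow y (Suc p) ** (mpow a p ** a ** mpow a p) ** mpow x (Suc p)"
    proof -
      have "d ** a ** d = e ** a ** d" using de by simp
      then show ?thesis by (simp add: e_def d_def mma)
    qed
    also have "\<dots> = mpow y (Suc p) ** mpow a p" 
      unfolding pp2 by (simp only: mma[symmetric] F1[symmetric])
    finally show ?thesis using de e_def by simp
  qed
  show ?thesis using c1 c2 c3 unfolding drz_def d_def by simp
qed

lemma drz_lower:
  assumes d: "drz a p d" and z: "mpow a k = mpow a (Suc k) ** z" and kp: "k \<le> p"
  shows "drz a k d"
proof -
  have d1: "mpow a (Suc p) ** d = mpow a p" and d2: "d ** a ** d = d" and d3: "a ** d = d ** a"
    using d unfolding drz_def by auto
  obtain w where w: "mpow a k = mpow a (Suc p) ** w"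
    using right_chain[OF z, of "Suc p - k"] kp by auto
  have cm: "mpow a j ** d = d ** mpow a j" for j by (rule mpow_comm[OF d3])
  have "mpow a (Suc k) ** d = d ** a ** mpow a k" by (simp only: cm) (simp add: mpow_Suc mma)
  also have "\<dots> = d ** mpow a (Suc (Suc p)) ** w" by (simp add: w mma mpow_Suc)
  also have "\<dots> = mpow a (Suc (Suc p)) ** d ** w" by (simp add: cm)
  also have "\<dots> = mpow a k"
  proof -
    have "mpow a (Suc (Suc p)) ** d = mpow a (Suc p)" by (metis mpow_Suc d1 mma)
    then show ?thesis by (simp add: w)
  qed
  finally show ?thesis using d2 d3 unfolding drz_def by simp
qed

lemma stab_right: "mrange (mpow a k) = mrange (mpow a (Suc k)) \<Longrightarrow> \<exists>x. mpow a k = mpow a (Suc k) ** x"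
  by (rule mrange_factor) simp

lemma drazin_exists: "\<exists>d. drz (M::complex^'n^'n) (ind M) d"
proof -
  obtain q where q: "mrange (mpow (transpose M) q) = mrange (mpow (transpose M) (Suc q))"
    using stab_exists by blast
  define p where "p = max (ind M) q"
  have s1: "mrange (mpow M p) = mrange (mpow M (Suc p))"
    by (rule stab_mono[OF ind_stab]) (simp add: p_def)
  have s2: "mrange (mpow (transpose M) p) = mrange (mpow (transpose M) (Suc p))"
    by (rule stab_mono[OF q]) (simp add: p_def)
  obtain x where x: "mpow M p = mpow M (Suc p) ** x"
    using stab_right[OF s1] by auto
  obtain x' where x': "mpow (transpose M) p = mpow (transpose M) (Suc p) ** x'"
    using stab_right[OF s2] by auto
  have y: "mpow M p = transpose x' ** mpow M (Suc p)"
    using arg_cong[OF x', of transpose] by (simp add: matrix_transpose_mul flip: mpow_transpose)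
  obtain z where z: "mpow M (ind M) = mpow M (Suc (ind M)) ** z"
    using stab_right[OF ind_stab] by blast
  show ?thesis using drz_lower[OF drazin_construct[OF x y] z] p_def by auto
qed

lemma drz_pow: "drz a k d \<Longrightarrow> d = mpow d (Suc j) ** mpow a j"
proof (induction j)
  case 0 then show ?case by (simp add: mpow_Suc)
next
  case (Suc j)
  then have d2: "d ** a ** d = d" and d3: "a ** d = d ** a" unfolding drz_def by auto
  have dd: "d = d ** d ** a" using d2 d3 by (metis mma)
  have "mpow d (Suc j) ** mpow a j = mpow d j ** d ** mpow a j" by (simp add: mpow_Suc')
  also have "\<dots> = mpow d j ** d ** d ** a ** mpow a j" using dd by (metis mma)
  also have "\<dots> = mpow d (Suc (Suc j)) ** mpow a (Suc j)" by (simp only: mpow_Suc'[of d] mpow_Suc[of a] mma)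
  finally show ?case using Suc by simp
qed

lemma drz_unique:
  assumes d: "drz a k d" and e: "drz a k e"
  shows "d = e"
proof -
  have d1: "mpow a (Suc k) ** d = mpow a k" and d3: "a ** d = d ** a"
    using d unfolding drz_def by auto
  have e1: "mpow a (Suc k) ** e = mpow a k" and e3: "a ** e = e ** a"
    using e unfolding drz_def by auto
  have cmd: "mpow a j ** d = d ** mpow a j" for j by (rule mpow_comm[OF d3])
  have cme: "mpow a j ** e = e ** mpow a j" for j by (rule mpow_comm[OF e3])
  have cde: "mpow a j ** mpow d i = mpow d i ** mpow a j" for i j
    by (metis cmd mpow_comm)
  have cee: "mpow a j ** mpow e i = mpow e i ** mpow a j" for i j
    by (metis cme mpow_comm)
  have "d = mpow d (Suc k) ** mpow a k" by (rule drz_pow[OF d])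
  also have "\<dots> = mpow d (Suc k) ** mpow a (Suc k) ** e" by (simp add: e1 flip: mma)
  also have "mpow d (Suc k) ** mpow a (Suc k) = mpow d (Suc k) ** mpow a k ** a"
    by (simp add: mpow_Suc' mma)
  also have "\<dots> = d ** a" by (simp flip: drz_pow[OF d])
  finally have dae: "d = d ** a ** e" .
  have "e = mpow e (Suc k) ** mpow a k" by (rule drz_pow[OF e])
  also have "\<dots> = mpow a k ** mpow e (Suc k)" by (simp add: cee)
  also have "\<dots> = d ** mpow a (Suc k) ** mpow e (Suc k)"
  proof -
    have dk: "mpow a k = d ** mpow a (Suc k)" using d1 cmd by metis
    show ?thesis by (subst dk) (rule refl)
  qed
  finally have e0: "e = d ** mpow a (Suc k) ** mpow e (Suc k)" .
  have "mpow a (Suc k) ** mpow e (Suc k) = a ** (mpow a k ** mpow e (Suc k))"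
    by (simp add: mpow_Suc mma)
  also have "mpow a k ** mpow e (Suc k) = e" by (simp add: cee flip: drz_pow[OF e])
  finally have "e = d ** a ** e" using e0 by (metis mma)
  with dae show ?thesis by simp
qed

lemma wdrazin_exists: "\<exists>X. is_wdrazin A W X"
proof -
  define B where "B = A ** W"
  obtain d where d: "drz B (ind B) d" using drazin_exists by blast
  define k where "k = ind B"
  have d1: "mpow B (Suc k) ** d = mpow B k" and d2: "d ** B ** d = d" and d3: "B ** d = d ** B"
    using d unfolding drz_def k_def by auto
  have ddB: "d ** d ** B = d" using d2 d3 by (metis mma)
  define X where "X = d ** d ** A"
  have i: "mpow B (Suc k) ** X ** W = mpow B k"
  proof -
    have "mpow B (Suc k) ** X ** W = mpow B (Suc k) ** d ** (d ** B)"
      by (simp add: X_def B_def mma)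
    also have "\<dots> = mpow B (Suc k) ** d ** (B ** d)" by (simp add: d3)
    also have "\<dots> = mpow B k ** B ** d" by (simp add: d1 mma)
    also have "\<dots> = mpow B k" by (simp add: mpow_Suc'[symmetric] d1)
    finally show ?thesis .
  qed
  have ii: "X ** W ** A ** W ** X = X"
  proof -
    have "X ** W ** A ** W ** X = (d ** d ** B) ** B ** d ** d ** A"
      by (simp add: X_def B_def mma)
    also have "\<dots> = d ** d ** A" by (simp add: ddB d2)
    finally show ?thesis by (simp add: X_def)
  qed
  have iii: "A ** W ** X = X ** W ** A"
  proof -
    have "A ** W ** X = B ** d ** d ** A" by (simp add: X_def B_def mma)
    also have "\<dots> = d ** d ** B ** A" by (metis d3 mma)
    also have "\<dots> = X ** W ** A" by (simp add: X_def B_def mma)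
    finally show ?thesis .
  qed
  show ?thesis using i ii iii unfolding is_wdrazin_def B_def k_def by blast
qed

lemma wdrazin_drz:
  assumes "is_wdrazin A W X"
  shows "drz (A ** W) (ind (A ** W)) (X ** W)" and "X = X ** W ** (X ** W) ** A"
proof -
  have x1: "mpow (A ** W) (Suc (ind (A ** W))) ** X ** W = mpow (A ** W) (ind (A ** W))"
    and x2: "X ** W ** A ** W ** X = X" and x3: "A ** W ** X = X ** W ** A"
    using assms unfolding is_wdrazin_def by auto
  show "drz (A ** W) (ind (A ** W)) (X ** W)"
    unfolding drz_def
  proof (intro conjI)
    show "mpow (A ** W) (Suc (ind (A ** W))) ** (X ** W) = mpow (A ** W) (ind (A ** W))"
      using x1 by (simp add: mma)
    show "X ** W ** (A ** W) ** (X ** W) = X ** W" using x2 by (simp add: mma)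
    show "A ** W ** (X ** W) = X ** W ** (A ** W)" using x3 by (simp add: mma)
  qed
  have "X = X ** W ** (A ** W ** X)" using x2 by (simp add: mma)
  also have "\<dots> = X ** W ** (X ** W) ** A" using x3 by (simp add: mma)
  finally show "X = X ** W ** (X ** W) ** A" .
qed

lemma wdrazin_ok: "is_wdrazin A W (wdrazin A W)"
proof -
  obtain X where X: "is_wdrazin A W X" using wdrazin_exists by blast
  have "\<And>Y. is_wdrazin A W Y \<Longrightarrow> Y = X"
  proof -
    fix Y assume Y: "is_wdrazin A W Y"
    have "Y ** W = X ** W" using drz_unique wdrazin_drz(1)[OF X] wdrazin_drz(1)[OF Y] by metis
    then show "Y = X" using wdrazin_drz(2)[OF X] wdrazin_drz(2)[OF Y] by metis
  qed
  then have "\<exists>!X. is_wdrazin A W X" using X by blast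
  then show ?thesis unfolding wdrazin_def by (rule theI')
qed

lemma cadj_mult: "cadj (A ** B) = cadj B ** cadj A"
  by (simp add: cadj_def matrix_matrix_mult_def vec_eq_iff mult.commute)
lemma cadj_cadj[simp]: "cadj (cadj A) = A"
  by (simp add: cadj_def vec_eq_iff)
lemma cadj_mat1[simp]: "cadj (mat 1 :: complex^'n^'n) = mat 1"
  by (simp add: cadj_def vec_eq_iff mat_def)
lemma cadj_diff: "cadj (A - B) = cadj A - cadj B"
  by (simp add: cadj_def vec_eq_iff)
lemma cadj_zero[simp]: "cadj 0 = 0"
  by (simp add: cadj_def vec_eq_iff)
lemma cadj_mpow: "cadj (mpow A k) = mpow (cadj A) k"
  by (induction k) (simp_all add: mpow_Suc mpow_Suc' cadj_mult mpow_comm_self)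
lemma mult_diff_right: "(A::complex^'n^'m) ** (B - C) = A ** B - A ** C"
  by (simp add: matrix_matrix_mult_def vec_eq_iff sum_subtractf algebra_simps)
lemma mult_diff_left: "((A::complex^'n^'m) - B) ** C = A ** C - B ** C"
  by (simp add: matrix_matrix_mult_def vec_eq_iff sum_subtractf algebra_simps)

lemma proper:
  fixes Y :: "complex^'n^'m"
  assumes "cadj Y ** Y = 0"
  shows "Y = 0"
proof -
  have "Y $ i $ j = 0" for i j
  proof -
    have "(cadj Y ** Y) $ j $ j = (\<Sum>l\<in>UNIV. complex_of_real ((cmod (Y $ l $ j))\<^sup>2))"
    proof -
      have "z * cnj z = (complex_of_real (cmod z))\<^sup>2" for z
        by (metis complex_norm_square of_real_power)
      then show ?thesis by (simp add: cadj_def matrix_matrix_mult_def mult.commute)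
    qed
    then have "complex_of_real (\<Sum>l\<in>UNIV. (cmod (Y $ l $ j))\<^sup>2) = 0"
      using assms by (simp add: of_real_sum of_real_power)
    then have "(\<Sum>l\<in>UNIV. (cmod (Y $ l $ j))\<^sup>2) = 0"
      by (simp only: of_real_eq_0_iff)
    then have "\<forall>l\<in>UNIV. (cmod (Y $ l $ j))\<^sup>2 = 0"
      by (subst sum_nonneg_eq_0_iff[symmetric]) auto
    then show ?thesis by simp
  qed
  then show ?thesis by (simp add: vec_eq_iff)
qed

lemma herm_step:
  assumes h: "cadj H = H" and z: "mpow H (Suc (Suc j)) ** Y = 0"
  shows "mpow H (Suc j) ** Y = 0"
proof (rule proper)
  have pp: "mpow H (Suc j) ** mpow H (Suc j) = mpow H j ** mpow H (Suc (Suc j))"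
    by (metis mpow_add add_Suc add_Suc_right)
  have "cadj (mpow H (Suc j) ** Y) ** (mpow H (Suc j) ** Y)
      = cadj Y ** (mpow H (Suc j) ** mpow H (Suc j)) ** Y"
    by (simp add: cadj_mult cadj_mpow h mma)
  also have "\<dots> = cadj Y ** mpow H j ** (mpow H (Suc (Suc j)) ** Y)"
    by (simp add: pp mma)
  also have "\<dots> = 0" by (simp add: z)
  finally show "cadj (mpow H (Suc j) ** Y) ** (mpow H (Suc j) ** Y) = 0" .
qed

lemma herm_down:
  assumes h: "cadj H = H"
  shows "mpow H (Suc j) ** Y = 0 \<Longrightarrow> H ** Y = 0"
proof (induction j)
  case 0 then show ?case by (simp add: mpow_Suc)
next
  case (Suc j) then show ?case using herm_step[OF h] by blast
qed

lemma group_inv: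
  assumes h: "cadj H = H"
  shows "\<exists>g. drz H 1 g"
proof -
  obtain d where d: "drz H (ind H) d" using drazin_exists by blast
  define k where "k = ind H"
  have d1: "mpow H (Suc k) ** d = mpow H k" and d2: "d ** H ** d = d" and d3: "H ** d = d ** H"
    using d unfolding drz_def k_def by auto
  have "mpow H (Suc k) ** (mat 1 - H ** d) = mpow H (Suc k) - H ** (mpow H (Suc k) ** d)"
    by (simp add: mult_diff_right mma mpow_comm_self)
  also have "\<dots> = 0" by (simp only: d1 mpow_Suc[symmetric]) simp
  finally have "H ** (mat 1 - H ** d) = 0" by (rule herm_down[OF h])
  then have "H ** H ** d = H" by (simp add: mult_diff_right mma)
  then have "mpow H (Suc 1) ** d = mpow H 1" by (simp add: mpow_Suc)
  then show ?thesis using d2 d3 unfolding drz_def by blast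
qed

lemma mp_exists: "\<exists>X. is_MP (M::complex^'n^'n) X"
proof -
  define H where "H = cadj M ** M"
  have h: "cadj H = H" by (simp add: H_def cadj_mult)
  obtain g where g: "drz H 1 g" using group_inv[OF h] by blast
  have g1: "H ** H ** g = H" and g2: "g ** H ** g = g" and g3: "H ** g = g ** H"
    using g unfolding drz_def by (auto simp: mpow_Suc mma)
  have gh: "drz H 1 (cadj g)"
    unfolding drz_def
  proof (intro conjI)
    have "cadj (H ** H ** g) = cadj H" using g1 by simp
    then have "cadj g ** H ** H = H" by (simp add: cadj_mult h mma)
    moreover have c: "H ** cadj g = cadj g ** H"
      using arg_cong[OF g3, of cadj] by (simp add: cadj_mult h)
    ultimately show "mpow H (Suc 1) ** cadj g = mpow H 1"
      by (simp add: mpow_Suc) (metis c mma)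
    show "cadj g ** H ** cadj g = cadj g"
      using arg_cong[OF g2, of cadj] by (simp add: cadj_mult h mma)
    show "H ** cadj g = cadj g ** H" by (rule c)
  qed
  have cg: "cadj g = g" using drz_unique[OF gh g] .
  have HgH: "H ** g ** H = H" using g1 g3 by (metis mma)
  define X where "X = g ** cadj M"
  have MgH: "M ** g ** H = M"
  proof -
    have "cadj (M ** (mat 1 - g ** H)) ** (M ** (mat 1 - g ** H))
        = cadj (mat 1 - g ** H) ** (H ** (mat 1 - g ** H))"
      by (simp add: cadj_mult H_def mma)
    also have "H ** (mat 1 - g ** H) = 0" by (simp add: mult_diff_right HgH mma)
    finally have "cadj (M ** (mat 1 - g ** H)) ** (M ** (mat 1 - g ** H)) = 0" by simp
    then have "M ** (mat 1 - g ** H) = 0" by (rule proper)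
    then show ?thesis by (simp add: mult_diff_right mma)
  qed
  have "M ** X ** M = M" using MgH by (simp add: X_def H_def mma)
  moreover have "X ** M ** X = X" using g2 by (simp add: X_def H_def mma)
  moreover have "cadj (M ** X) = M ** X" by (simp add: X_def cadj_mult cg mma)
  moreover have "cadj (X ** M) = X ** M"
  proof -
    have "X ** M = g ** H" by (simp add: X_def H_def mma)
    moreover have "cadj (g ** H) = g ** H" using g3 by (simp add: cadj_mult cg h)
    ultimately show ?thesis by simp
  qed
  ultimately show ?thesis unfolding is_MP_def by blast
qed

lemma mp_unique:
  assumes X: "is_MP M X" and Y: "is_MP M Y"
  shows "X = Y"
proof -
  have x1: "M ** X ** M = M" and x2: "X ** M ** X = X" and x3: "cadj (M ** X) = M ** X"
    and x4: "cadj (X ** M) = X ** M" using X unfolding is_MP_def by auto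
  have y1: "M ** Y ** M = M" and y2: "Y ** M ** Y = Y" and y3: "cadj (M ** Y) = M ** Y"
    and y4: "cadj (Y ** M) = Y ** M" using Y unfolding is_MP_def by auto
  have "X = X ** cadj (M ** X)" using x2 x3 by (simp add: mma)
  also have "\<dots> = X ** cadj X ** cadj (M ** Y ** M)" by (simp add: y1 cadj_mult mma)
  also have "\<dots> = X ** cadj (M ** X) ** cadj (M ** Y)" by (simp add: cadj_mult mma)
  also have "\<dots> = X ** M ** Y" by (simp add: x3 y3 x2 mma)
  finally have a: "X = X ** M ** Y" .
  have "Y = cadj (Y ** M) ** Y" using y2 y4 by simp
  also have "\<dots> = cadj (M ** X ** M) ** cadj Y ** Y" by (simp add: x1 cadj_mult mma)
  also have "\<dots> = cadj (X ** M) ** cadj (Y ** M) ** Y" by (simp add: cadj_mult mma)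
  also have "\<dots> = X ** M ** (Y ** M ** Y)" by (simp add: x4 y4 mma)
  also have "\<dots> = X ** M ** Y" by (simp add: y2)
  finally show ?thesis using a by simp
qed

lemma mp_ok: "is_MP (M::complex^'n^'n) (mp_inv M)"
proof -
  have "\<exists>!X. is_MP M X" using mp_exists mp_unique by blast
  then show ?thesis unfolding mp_inv_def by (rule theI')
qed

lemma drz_up:
  assumes d: "drz a k d" and kj: "k \<le> j"
  shows "mpow a j = mpow a (Suc j) ** d" and "mpow a j = d ** mpow a (Suc j)"
proof -
  have d1: "mpow a (Suc k) ** d = mpow a k" and d3: "a ** d = d ** a"
    using d unfolding drz_def by auto
  have "mpow a j = mpow a (j - k) ** mpow a k" using kj by (simp flip: mpow_add)
  also have "\<dots> = mpow a (j - k) ** mpow a (Suc k) ** d" by (simp add: d1 flip: mma)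
  also have "mpow a (j - k) ** mpow a (Suc k) = mpow a (Suc j)" using kj by (simp flip: mpow_add)
  finally show 1: "mpow a j = mpow a (Suc j) ** d" .
  show "mpow a j = d ** mpow a (Suc j)" using 1 mpow_comm[OF d3] by metis
qed

lemma drz_pow': "drz a k d \<Longrightarrow> d = mpow a j ** mpow d (Suc j)"
proof -
  assume d: "drz a k d"
  have d3: "a ** d = d ** a" using d unfolding drz_def by auto
  have "mpow a j ** mpow d i = mpow d i ** mpow a j" for i
    by (metis mpow_comm[OF d3] mpow_comm)
  then show ?thesis using drz_pow[OF d, of j] by metis
qed

lemma mpow_WA: "mpow (W ** A) (Suc n) = W ** mpow (A ** W) n ** A"
proof (induction n)
  case 0 then show ?case by (simp add: mpow_Suc)
next
  case (Suc n)
  have "mpow (W ** A) (Suc (Suc n)) = W ** A ** (W ** mpow (A ** W) n ** A)"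
    by (simp only: mpow_Suc[of "W ** A" "Suc n"] Suc)
  also have "\<dots> = W ** mpow (A ** W) (Suc n) ** A" by (simp add: mpow_Suc mma)
  finally show ?case .
qed

theorem corollary4p5:
  fixes A W X :: "complex^'n^'n"
  assumes "is_w13 (wdrazin A W) W X"
  shows "wcoreEP A W = wdrazin A W ** W ** wdrazin A W ** W ** X"
proof -
  define D where "D = wdrazin A W"
  define B where "B = A ** W"
  define C where "C = W ** A"
  define kb where "kb = ind B"
  define kc where "kc = ind C"
  define k where "k = max kb kc"
  define M where "M = mpow C k"
  define Y where "Y = D ** W ** D ** W ** X"
  define S where "S = W ** D ** W ** X"
  define E where "E = W ** D"
  define F where "F = D ** W"
  have Dw: "is_wdrazin A W D" unfolding D_def by (rule wdrazin_ok)
  have D1: "mpow B (Suc kb) ** D ** W = mpow B kb" and D2: "D ** W ** A ** W ** D = D"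
    and D3: "A ** W ** D = D ** W ** A"
    using Dw unfolding is_wdrazin_def B_def kb_def by auto
  have Fd: "drz B kb F" using wdrazin_drz(1)[OF Dw] unfolding F_def B_def kb_def .
  have DF: "D = F ** F ** A" using wdrazin_drz(2)[OF Dw] unfolding F_def by (simp add: mma)
  have X1: "D = D ** W ** X ** W ** D" and X2: "cadj S = S"
    using assms unfolding is_w13_def D_def[symmetric] S_def by auto
  have WAWY: "W ** A ** W ** Y = S"
  proof -
    have "W ** A ** W ** D ** W ** D = W ** (A ** W ** D) ** W ** D" by (simp add: mma)
    also have "\<dots> = W ** (D ** W ** A ** W ** D)" by (simp add: D3 mma)
    also have "\<dots> = W ** D" by (simp add: D2)
    finally have "W ** A ** W ** D ** W ** D = W ** D" .
    then show ?thesis unfolding Y_def S_def by (metis mma)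
  qed
  have ECE: "E ** C ** E = E" unfolding E_def C_def by (metis D2 mma)
  have CE: "C ** E = E ** C" using D3 by (simp add: E_def C_def) (metis mma)
  have CjE: "mpow C (Suc (Suc j)) ** E = mpow C (Suc j)" if "kb \<le> j" for j
  proof -
    have BjF: "mpow B (Suc j) ** F = mpow B j" using drz_up(1)[OF Fd that] by simp
    have "mpow C (Suc (Suc j)) ** E = W ** mpow B (Suc j) ** (A ** W ** D)"
      by (simp add: mpow_WA E_def B_def C_def mma)
    also have "\<dots> = W ** (mpow B (Suc j) ** F) ** A" by (simp add: D3 F_def mma)
    also have "\<dots> = mpow C (Suc j)" by (simp only: BjF) (simp add: mpow_WA C_def B_def)
    finally show ?thesis .
  qed
  have Ed: "drz C (Suc kb) E"
    unfolding drz_def using CjE[of kb] ECE CE by simp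
  have stc: "mrange (mpow C k) = mrange (mpow C (Suc k))"
    by (rule stab_mono[OF ind_stab]) (simp add: k_def kc_def)
  obtain U where U: "mpow C k = mpow C (Suc k) ** U" using stab_right[OF stc] by blast
  have "mpow C (Suc k) = mpow C (Suc (Suc k)) ** E" using CjE[of k] by (simp add: k_def)
  also have "\<dots> = E ** mpow C (Suc (Suc k))" by (rule mpow_comm[OF CE])
  finally have ME: "M = E ** (mpow C (Suc (Suc k)) ** U)" using U by (simp add: M_def mma)
  have SE: "S ** E = E" using X1 by (simp add: S_def E_def mma) (metis mma)
  have SM: "S ** M = M" using SE ME by (metis mma)
  have SMZ: "S = M ** (mpow E (Suc k) ** W ** X)"
  proof -
    have "E = mpow C k ** mpow E (Suc k)" by (rule drz_pow'[OF Ed])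
    then show ?thesis unfolding S_def M_def by (metis E_def mma)
  qed
  have SQ: "S = M ** mp_inv M"
  proof -
    define Q where "Q = M ** mp_inv M"
    have q1: "M ** mp_inv M ** M = M" and q3: "cadj Q = Q"
      using mp_ok[of M] unfolding is_MP_def Q_def by auto
    have QM: "Q ** M = M" using q1 by (simp add: Q_def)
    have QS: "Q ** S = S" using SMZ QM by (metis mma)
    have SQ': "S ** Q = Q" using SM by (simp add: Q_def mma)
    have "S = cadj (Q ** S)" using QS X2 by simp
    also have "\<dots> = S ** Q" by (simp add: cadj_mult X2 q3)
    finally show ?thesis using SQ' Q_def by simp
  qed
  have FB: "F = mpow B k ** mpow F (Suc k)" by (rule drz_pow'[OF Fd])
  have rY: "mrange Y \<subseteq> mrange (mpow B k)"
  proof -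
    have "Y = mpow B k ** (mpow F (Suc k) ** F ** A ** W ** D ** W ** X)"
      unfolding Y_def by (subst DF, subst FB) (simp add: mma)
    then show ?thesis using mrange_mult by metis
  qed
  have okY: "is_wcoreEP A W Y"
    unfolding is_wcoreEP_def Let_def
    using WAWY SQ rY by (simp add: M_def C_def k_def kb_def kc_def B_def)
  have uniq: "Z = Y" if Z: "is_wcoreEP A W Z" for Z
  proof -
    have z1: "W ** A ** W ** Z = S" and z2: "mrange Z \<subseteq> mrange (mpow B k)"
      using Z SQ unfolding is_wcoreEP_def Let_def
      by (simp_all add: M_def C_def k_def kb_def kc_def B_def)
    obtain U1 where U1: "Z = mpow B k ** U1" using mrange_factor[OF z2] by blast
    obtain U2 where U2: "Y = mpow B k ** U2" using mrange_factor[OF rY] by blast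
    define T where "T = Z - Y"
    have T: "T = mpow B k ** (U1 - U2)" by (simp add: T_def U1 U2 mult_diff_right)
    have BBT: "B ** B ** T = 0"
    proof -
      have "B ** B ** T = A ** (W ** A ** W ** Z - W ** A ** W ** Y)"
        by (simp add: T_def B_def mult_diff_right mma)
      then show ?thesis by (simp add: z1 WAWY)
    qed
    have kk: "kb \<le> k" "kb \<le> Suc k" by (simp_all add: k_def)
    have "mpow B k = F ** F ** mpow B (Suc (Suc k))"
      using drz_up(2)[OF Fd kk(1)] drz_up(2)[OF Fd kk(2)] by (metis mma)
    then have "T = F ** F ** (B ** B ** T)" using T by (simp add: mpow_Suc mma)
    then have "T = 0" using BBT by simp
    then show ?thesis by (simp add: T_def)
  qed
  have "wcoreEP A W = Y"
    unfolding wcoreEP_def using okY uniq by (rule the_equality)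
  then show ?thesis by (simp add: Y_def D_def)
qed

end
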